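(* Let $Y$ be a topological space and $L=\mathcal{O}(Y)$ its Heyting algebra of open sets. Let $\mathfrak{X}=(X,(R_j)_{j\in J})$ be a relational structure of type $\tau$. Then there is an isomorphism of algebras of type $\tau$ (which is moreover a Heyting algebra isomorphism of the underlying lattices) $\Phi:L^{\mathfrak{X}}\to\hat{\mathfrak{X}}^+$ from the convolution algebra of $\mathfrak{X}$ over $L$ to the complex algebra of the constant relational étalé $\hat{\mathfrak{X}}$, where $\Phi(\alpha)$ is the subobject $A$ of $\hat{X}$ (an open subset of $X\times Y$) with cross sections $(\{x\}\times Y)\cap A=\{x\}\times\alpha(x)$ for each $x\in X$.
   Context: A type is a function $\tau:J\to\mathbb{N}$, $j\mapsto n_j$. A relational structure $\mathfrak{X}=(X,(R_j)_J)$ of type $\tau$ is a set $X$ with an $(n_j+1)$-ary relation $R_j\subseteq X^{n_j+1}$ for each $j$. For a complete lattice $L$, the convolution algebra $L^{\mathfrak{X}}=(L^X,(f_j)_J)$ has underlying set all functions $X\to L$ and operations $f_j(\alpha_1,\ldots,\alpha_{n_j})(x)=\bigvee\{\alpha_1(x_1)\wedge\cdots\wedge\alpha_{n_j}(x_{n_j})\mid (x_1,\ldots,x_{n_j},x)\in R_j\}$. An étalé space over $Y$ is a pair $(E,\pi)$ with $\pi:E\to Y$ a local homeomorphism; morphisms are continuous maps commuting with the projections; subobjects of $(E,\pi)$ (equivalence classes of monomorphisms into it) correspond to open subsets of $E$, and $\mathrm{Sub}(E,\pi)$ denotes the set of subobjects. Products of étalé spaces are fibered products over $Y$. The constant étalé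 $\hat{X}$ is $X\times Y$ ($X$ discrete) with projection onto $Y$; $\hat{X}^{k}$ is identified with $X^k\times Y$, and for $R\subseteq X^{k}$, $\hat{R}=R\times Y$ is a subobject of $\hat{X}^k$. The constant relational étalé of $\mathfrak{X}$ is $\hat{\mathfrak{X}}=(\hat{X},(\hat{R}_j)_J)$. For a relational étalé $\mathcal{E}=(E,\pi,(R_j)_J)$ (an étalé space with a subobject $R_j$ of $(E,\pi)^{n_j+1}$ for each $j$), its complex algebra is $\mathcal{E}^+=(\mathrm{Sub}(E,\pi),(g_j)_J)$ with $g_j(A_1,\ldots,A_{n_j})=\pi_{n_j+1}((A_1\times\cdots\times A_{n_j}\times E)\cap R_j)$, the étalé relational image (product taken as étalé product, $\pi_{n_j+1}$ the last projection). For the constant case: $(x,y)\in\hat{R}_j(A_1,\ldots,A_{n_j})$ iff there exist $x_1,\ldots,x_{n_j}$ with $(x_1,\ldots,x_{n_j},x)\in R_j$ and $(x_i,y)\in A_i$ for all $i$. *)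

theory Defs
  imports "HOL-Analysis.Analysis"
begin

text \<open>An (n j + 1)-ary relation R j is represented as a set of pairs (xs, x) with
  length xs = n j (the tuple (x_1,...,x_{n_j}, x)).\<close>

definition rel_structure :: "('j \<Rightarrow> nat) \<Rightarrow> ('j \<Rightarrow> ('x list \<times> 'x) set) \<Rightarrow> bool" where
  "rel_structure n R \<longleftrightarrow> (\<forall>j xs x. (xs, x) \<in> R j \<longrightarrow> length xs = n j)"

definition opens :: "'y topology \<Rightarrow> 'y set set" where
  "opens Y = {U. openin Y U}"

definition conv_carrier :: "'y topology \<Rightarrow> ('x \<Rightarrow> 'y set) set" where
  "conv_carrier Y = {\<alpha>. \<forall>x. openin Y (\<alpha> x)}"

text \<open>Convolution operation f_j: join (union) over tuples in R_j of the finite meet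
  (intersection inside topspace Y; the empty meet is the top element topspace Y).\<close>
definition conv_op :: "'y topology \<Rightarrow> ('j \<Rightarrow> ('x list \<times> 'x) set) \<Rightarrow> 'j
    \<Rightarrow> ('x \<Rightarrow> 'y set) list \<Rightarrow> 'x \<Rightarrow> 'y set" where
  "conv_op Y R j \<alpha>s x =
     \<Union> {topspace Y \<inter> (\<Inter>i<length xs. (\<alpha>s ! i) (xs ! i)) | xs. (xs, x) \<in> R j}"

definition const_etale_top :: "'y topology \<Rightarrow> ('x \<times> 'y) topology" where
  "const_etale_top Y = prod_topology (discrete_topology (UNIV :: 'x set)) Y"

definition etale_sub :: "'y topology \<Rightarrow> ('x \<times> 'y) set set" where
  "etale_sub Y = {A. openin (const_etale_top Y) A}"

text \<open>Operation g_j of the complex algebra of the constant relational etale: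
  the last projection of (A_1 x ... x A_n x E) \<inter> R^_j, where the product is the
  fibered product over Y (all points lie over the same y) and R^_j = R_j x Y.\<close>
definition cx_op :: "'y topology \<Rightarrow> ('j \<Rightarrow> ('x list \<times> 'x) set) \<Rightarrow> 'j
    \<Rightarrow> ('x \<times> 'y) set list \<Rightarrow> ('x \<times> 'y) set" where
  "cx_op Y R j As =
     {(x, y). y \<in> topspace Y \<and>
        (\<exists>xs. length xs = length As \<and> (xs, x) \<in> R j \<and>
              (\<forall>i<length As. (xs ! i, y) \<in> As ! i))}"

definition heyting_imp :: "'a topology \<Rightarrow> 'a set \<Rightarrow> 'a set \<Rightarrow> 'a set" where
  "heyting_imp T a b = T interior_of ((topspace T - a) \<union> b)"

definition Phi :: "('x \<Rightarrow> 'y set) \<Rightarrow> ('x \<times> 'y) set" where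
  "Phi \<alpha> = (\<Union>x. {x} \<times> \<alpha> x)"

end

theory Submission
  imports Defs
begin

lemma Phi_mem[simp]: "(x, y) \<in> Phi \<alpha> \<longleftrightarrow> y \<in> \<alpha> x"
  by (auto simp: Phi_def)

lemma slice_open:
  assumes "openin (const_etale_top Y) U"
  shows "openin Y {y. (x, y) \<in> U}"
proof -
  have cm: "continuous_map Y (const_etale_top Y) (\<lambda>y. (x, y))"
    unfolding const_etale_top_def
    by (intro continuous_map_pairedI) (auto simp: continuous_map_id[unfolded id_def])
  have "openin Y {y \<in> topspace Y. (x, y) \<in> U}"
    using openin_continuous_map_preimage[OF cm assms] .
  moreover have "{y \<in> topspace Y. (x, y) \<in> U} = {y. (x, y) \<in> U}"
    using openin_subset[OF assms] by (auto simp: const_etale_top_def)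
  ultimately show ?thesis by simp
qed

lemma open_const_iff:
  "openin (const_etale_top Y) U \<longleftrightarrow> U \<subseteq> UNIV \<times> topspace Y \<and> (\<forall>x. openin Y {y. (x, y) \<in> U})"
proof
  assume "openin (const_etale_top Y) U"
  then show "U \<subseteq> UNIV \<times> topspace Y \<and> (\<forall>x. openin Y {y. (x, y) \<in> U})"
    using slice_open openin_subset by (fastforce simp: const_etale_top_def)
next
  assume a: "U \<subseteq> UNIV \<times> topspace Y \<and> (\<forall>x. openin Y {y. (x, y) \<in> U})"
  have "U = (\<Union>x. {x} \<times> {y. (x, y) \<in> U})" by auto
  moreover have "openin (const_etale_top Y) ({x} \<times> {y. (x, y) \<in> U})" for x
    using a unfolding const_etale_top_def openin_prod_Times_iff by auto
  ultimately show "openin (const_etale_top Y) U"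
    by (metis (no_types, lifting) openin_Union imageE)
qed

lemma open_Phi_iff: "openin (const_etale_top Y) (Phi \<alpha>) \<longleftrightarrow> (\<forall>x. openin Y (\<alpha> x))"
proof -
  have e: "{y. (x, y) \<in> Phi \<alpha>} = \<alpha> x" for x by auto
  show ?thesis unfolding open_const_iff e
    using openin_subset by (fastforce simp: Phi_def)
qed

lemma Phi_inj: "inj Phi"
proof (rule injI)
  fix a b :: "'x \<Rightarrow> 'y set" assume "Phi a = Phi b"
  then have "\<forall>x y. y \<in> a x \<longleftrightarrow> y \<in> b x" by (metis Phi_mem)
  then show "a = b" by blast
qed

theorem theorem3:
  fixes Y :: "'y topology"
    and n :: "'j \<Rightarrow> nat"
    and R :: "'j \<Rightarrow> ('x list \<times> 'x) set"
  assumes "rel_structure n R"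
  shows "bij_betw (Phi :: ('x \<Rightarrow> 'y set) \<Rightarrow> _) (conv_carrier Y) (etale_sub Y :: ('x \<times> 'y) set set)
    \<and> (\<forall>\<alpha>\<in>conv_carrier Y. \<forall>x::'x. ({x} \<times> UNIV) \<inter> Phi \<alpha> = {x} \<times> \<alpha> x)
    \<and> (\<forall>j \<alpha>s. length \<alpha>s = n j \<and> set \<alpha>s \<subseteq> conv_carrier Y \<longrightarrow>
          Phi (conv_op Y R j \<alpha>s) = cx_op Y R j (map Phi \<alpha>s))
    \<and> (\<forall>\<alpha>\<in>conv_carrier Y. \<forall>\<beta>\<in>conv_carrier Y. (\<forall>x::'x. \<alpha> x \<subseteq> \<beta> x) \<longleftrightarrow> Phi \<alpha> \<subseteq> Phi \<beta>)
    \<and> (\<forall>\<alpha>\<in>conv_carrier Y. \<forall>\<beta>\<in>conv_carrier Y.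
          Phi (\<lambda>x::'x. \<alpha> x \<inter> \<beta> x) = Phi \<alpha> \<inter> Phi \<beta>
        \<and> Phi (\<lambda>x. \<alpha> x \<union> \<beta> x) = Phi \<alpha> \<union> Phi \<beta>
        \<and> Phi (\<lambda>x. heyting_imp Y (\<alpha> x) (\<beta> x))
            = heyting_imp (const_etale_top Y) (Phi \<alpha>) (Phi \<beta>))
    \<and> Phi (\<lambda>x. topspace Y) = topspace (const_etale_top Y :: ('x \<times> 'y) topology)
    \<and> Phi (\<lambda>x. {}) = ({} :: ('x \<times> 'y) set)"
proof (intro conjI)
  show "bij_betw (Phi :: ('x \<Rightarrow> 'y set) \<Rightarrow> _) (conv_carrier Y) (etale_sub Y :: ('x \<times> 'y) set set)"
  proof (rule bij_betw_imageI)
    show "inj_on Phi (conv_carrier Y)" using Phi_inj by (metis inj_on_subset subset_UNIV)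
    show "Phi ` conv_carrier Y = (etale_sub Y :: ('x \<times> 'y) set set)"
    proof
      show "Phi ` conv_carrier Y \<subseteq> etale_sub Y"
        by (auto simp: conv_carrier_def etale_sub_def open_Phi_iff)
      show "(etale_sub Y :: ('x \<times> 'y) set set) \<subseteq> Phi ` conv_carrier Y"
      proof
        fix U :: "('x \<times> 'y) set" assume "U \<in> etale_sub Y"
        then have o: "openin (const_etale_top Y) U" by (simp add: etale_sub_def)
        have "U = Phi (\<lambda>x. {y. (x, y) \<in> U})" by (auto simp: Phi_def)
        moreover have "(\<lambda>x. {y. (x, y) \<in> U}) \<in> conv_carrier Y"
          using slice_open[OF o] by (simp add: conv_carrier_def)
        ultimately show "U \<in> Phi ` conv_carrier Y" by blast
      qed
    qed
  qed
  show "\<forall>\<alpha>\<in>conv_carrier Y. \<forall>x::'x. ({x} \<times> UNIV) \<inter> Phi \<alpha> = {x} \<times> \<alpha> x"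
    by auto
  show "\<forall>j \<alpha>s. length \<alpha>s = n j \<and> set \<alpha>s \<subseteq> conv_carrier Y \<longrightarrow>
          Phi (conv_op Y R j \<alpha>s) = cx_op Y R j (map Phi \<alpha>s)"
  proof (intro allI impI)
    fix j and \<alpha>s :: "('x \<Rightarrow> 'y set) list"
    assume h: "length \<alpha>s = n j \<and> set \<alpha>s \<subseteq> conv_carrier Y"
    have len: "(xs, x) \<in> R j \<Longrightarrow> length xs = length \<alpha>s" for xs x
      using assms h by (auto simp: rel_structure_def)
    show "Phi (conv_op Y R j \<alpha>s) = cx_op Y R j (map Phi \<alpha>s)"
    proof (rule set_eqI, clarify)
      fix x y
      show "((x, y) \<in> Phi (conv_op Y R j \<alpha>s)) = ((x, y) \<in> cx_op Y R j (map Phi \<alpha>s))"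
        unfolding Phi_mem conv_op_def cx_op_def using len
      proof (auto simp: Phi_def)
        fix xs assume "(xs, x) \<in> R j" "y \<in> topspace Y" "\<forall>i\<in>{..<length \<alpha>s}. y \<in> (\<alpha>s ! i) (xs ! i)"
        then show "\<exists>xs. length xs = length \<alpha>s \<and> (xs, x) \<in> R j \<and> (\<forall>i<length \<alpha>s. y \<in> (\<alpha>s ! i) (xs ! i))"
          using len by auto
      next
        fix xs assume "(xs, x) \<in> R j" "y \<in> topspace Y" "\<forall>i<length \<alpha>s. y \<in> (\<alpha>s ! i) (xs ! i)"
        then show "\<exists>xa. (\<exists>xs. xa = topspace Y \<inter> (\<Inter>i<length xs. (\<alpha>s ! i) (xs ! i)) \<and> (xs, x) \<in> R j) \<and> y \<in> xa"
          proof -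
          have "y \<in> topspace Y \<inter> (\<Inter>i<length xs. (\<alpha>s ! i) (xs ! i))"
            using len[of xs x] \<open>(xs, x) \<in> R j\<close> \<open>y \<in> topspace Y\<close> \<open>\<forall>i<length \<alpha>s. y \<in> (\<alpha>s ! i) (xs ! i)\<close> by auto
          then show ?thesis using \<open>(xs, x) \<in> R j\<close> by (rule_tac x="topspace Y \<inter> (\<Inter>i<length xs. (\<alpha>s ! i) (xs ! i))" in exI) blast
        qed
      qed
    qed
  qed
  show "\<forall>\<alpha>\<in>conv_carrier Y. \<forall>\<beta>\<in>conv_carrier Y. (\<forall>x::'x. \<alpha> x \<subseteq> \<beta> x) \<longleftrightarrow> Phi \<alpha> \<subseteq> Phi \<beta>"
    by (auto simp: Phi_def)
  show "\<forall>\<alpha>\<in>conv_carrier Y. \<forall>\<beta>\<in>conv_carrier Y.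
          Phi (\<lambda>x::'x. \<alpha> x \<inter> \<beta> x) = Phi \<alpha> \<inter> Phi \<beta>
        \<and> Phi (\<lambda>x. \<alpha> x \<union> \<beta> x) = Phi \<alpha> \<union> Phi \<beta>
        \<and> Phi (\<lambda>x. heyting_imp Y (\<alpha> x) (\<beta> x))
            = heyting_imp (const_etale_top Y) (Phi \<alpha>) (Phi \<beta>)"
  proof (intro ballI conjI)
    fix \<alpha> \<beta> :: "'x \<Rightarrow> 'y set"
    show "Phi (\<lambda>x::'x. \<alpha> x \<inter> \<beta> x) = Phi \<alpha> \<inter> Phi \<beta>" by (auto simp: Phi_def)
    show "Phi (\<lambda>x::'x. \<alpha> x \<union> \<beta> x) = Phi \<alpha> \<union> Phi \<beta>" by (auto simp: Phi_def)
    let ?S = "topspace (const_etale_top Y) - Phi \<alpha> \<union> Phi \<beta>"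
    have slS: "{y. (x, y) \<in> ?S} = (topspace Y - \<alpha> x) \<union> \<beta> x" for x
      by (auto simp: const_etale_top_def)
    show "Phi (\<lambda>x. heyting_imp Y (\<alpha> x) (\<beta> x))
            = heyting_imp (const_etale_top Y) (Phi \<alpha>) (Phi \<beta>)"
      unfolding heyting_imp_def
    proof (rule sym, rule interior_of_unique)
      show "Phi (\<lambda>x. Y interior_of (topspace Y - \<alpha> x \<union> \<beta> x)) \<subseteq> ?S"
      proof
        fix p assume p0: "p \<in> Phi (\<lambda>x. Y interior_of (topspace Y - \<alpha> x \<union> \<beta> x))"
        obtain x y where p: "p = (x, y)" by (cases p)
        from p0 have "(x, y) \<in> Phi (\<lambda>x. Y interior_of (topspace Y - \<alpha> x \<union> \<beta> x))" using p by simp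
        then have "y \<in> topspace Y - \<alpha> x \<union> \<beta> x" using interior_of_subset[of Y "topspace Y - \<alpha> x \<union> \<beta> x"] by auto
        then have "y \<in> {y. (x, y) \<in> ?S}" using slS[of x] by simp
        then show "p \<in> ?S" using p by simp
      qed
      show "openin (const_etale_top Y) (Phi (\<lambda>x. Y interior_of (topspace Y - \<alpha> x \<union> \<beta> x)))"
        by (simp add: open_Phi_iff)
      fix T' assume "T' \<subseteq> ?S" "openin (const_etale_top Y) T'"
      have "{y. (x, y) \<in> T'} \<subseteq> Y interior_of (topspace Y - \<alpha> x \<union> \<beta> x)" for x
      proof (rule interior_of_maximal)
        have "{y. (x, y) \<in> T'} \<subseteq> {y. (x, y) \<in> ?S}" using \<open>T' \<subseteq> ?S\<close> by auto
        then show "{y. (x, y) \<in> T'} \<subseteq> topspace Y - \<alpha> x \<union> \<beta> x" using slS[of x] by simp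
        show "openin Y {y. (x, y) \<in> T'}" by (rule slice_open) fact
      qed
      then show "T' \<subseteq> Phi (\<lambda>x. Y interior_of (topspace Y - \<alpha> x \<union> \<beta> x))"
        by (auto simp: Phi_def)
    qed
  qed
  show "Phi (\<lambda>x. topspace Y) = topspace (const_etale_top Y :: ('x \<times> 'y) topology)"
    by (auto simp: Phi_def const_etale_top_def)
  show "Phi (\<lambda>x. {}) = ({} :: ('x \<times> 'y) set)" by (auto simp: Phi_def)
qed

end
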